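(* Let $g(z)=\frac{1+z^2}{1-z-z^2}$ (the generating function of the modified Lucas numbers $1,1,3,4,7,11,\dots$) and $$f(z)=\frac{1-z-z^2-\sqrt{z^4+10z^3-13z^2-10z+1}}{4-2z},$$ where the square root is the formal power series with constant term $1$. Then $f(z)$ is a formal power series with $f(0)=0$ and $f'(0)\neq 0$, and the Riordan matrix $(g(z),f(z))$ is a pseudo-involution.
   Context: A Riordan matrix is a pair $(g(z),f(z))$ of formal power series over $\mathbb{C}$ with $g(z)=\sum_{n\ge 0} g_n z^n$, $g_0\neq 0$, and $f(z)=\sum_{n\ge 1} f_n z^n$ with $f_1\neq 0$; it represents the infinite lower-triangular matrix whose $k$-th column ($k\ge 0$) has generating function $g(z)f(z)^k$. Riordan matrices form a group under matrix multiplication, where $(g(z),f(z))*(h(z),l(z))=(g(z)h(f(z)),\,l(f(z)))$ and the identity is $(1,z)$. Let $M=(1,-z)$. A Riordan matrix $L$ is called a pseudo-involution if $(L*M)*(L*M)=(1,z)$. *)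

theory Defs
  imports Complex_Main "HOL-Computational_Algebra.Formal_Power_Series"
begin

text \<open>A Riordan matrix is represented by its pair (g, f) of formal power series
  with g_0 \<noteq> 0, f_0 = 0, f_1 \<noteq> 0.\<close>
definition is_riordan :: "complex fps \<times> complex fps \<Rightarrow> bool" where
  "is_riordan L \<longleftrightarrow> fps_nth (fst L) 0 \<noteq> 0 \<and> fps_nth (snd L) 0 = 0 \<and> fps_nth (snd L) 1 \<noteq> 0"

definition riordan_mult :: "complex fps \<times> complex fps \<Rightarrow> complex fps \<times> complex fps \<Rightarrow> complex fps \<times> complex fps" where
  "riordan_mult L K = (fst L * (fst K oo snd L), snd K oo snd L)"

definition riordan_M :: "complex fps \<times> complex fps" where
  "riordan_M = (1, - fps_X)"

definition pseudo_involution :: "complex fps \<times> complex fps \<Rightarrow> bool" where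
  "pseudo_involution L \<longleftrightarrow>
     riordan_mult (riordan_mult L riordan_M) (riordan_mult L riordan_M) = (1, fps_X)"

definition fps_sqrt1 :: "complex fps \<Rightarrow> complex fps" where
  "fps_sqrt1 P = (THE s. fps_nth s 0 = 1 \<and> s ^ 2 = P)"

end

theory Submission
  imports Defs
begin

unbundle fps_syntax

lemma alg1: fixes X f :: "'a::idom"
  shows "4*(2-X)*((2-X)*f*f - (1-X-X*X)*f + X + 2*X*X) = ((1-X-X*X) - f*(4-2*X))^2 - (X^4 + 10*X^3 - 13*X^2 - 10*X + 1)"
  by algebra
lemma alg2: fixes X h :: "'a::idom"
  shows "(2-X)*h*h + (1-X-X*X)*h + X + 2*X*X = 0 \<Longrightarrow> (2-h)*X*X + (1-h-h*h)*X + h + 2*h*h = 0" by algebra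
lemma alg3: fixes X h y :: "'a::idom"
  shows "(2-h)*y*y + (1-h-h*h)*y + h + 2*h*h = 0 \<Longrightarrow> (2-h)*X*X + (1-h-h*h)*X + h + 2*h*h = 0 \<Longrightarrow> (y - X) * ((2-h)*(y+X) + 1 - h - h*h) = 0" by algebra
lemma alg4: fixes X h :: "'a::idom"
  shows "(2-X)*h*h + (1-X-X*X)*h + X + 2*X*X = 0 \<Longrightarrow> (1 + X*X) * (1 + h*h) = 1 * ((1 - X - X*X) * (1 - h - h*h))" by algebra
lemma alg5: fixes X f :: "'a::idom"
  shows "(2-X)*f*f - (1-X-X*X)*f + X + 2*X*X = 0 \<Longrightarrow> (2-X)*(-f)*(-f) + (1-X-X*X)*(-f) + X + 2*X*X = 0" by algebra
lemma alg6: fixes t s :: "'a::idom"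
  shows "t^2 = s^2 \<Longrightarrow> (t - s) * (t + s) = 0" by algebra
lemma alg7: fixes a b c d :: "'a::idom"
  shows "(a * b) * (c * d) = (a*c) * (b*d)" by algebra

lemma sqrt1_props:
  fixes D :: "complex fps"
  assumes D0: "D $ 0 = 1"
  shows "fps_sqrt1 D $ 0 = 1 \<and> (fps_sqrt1 D)^2 = D"
proof -
  define s where "s = fps_radical (\<lambda>_ _. 1) 2 D"
  have s0: "s $ 0 = 1" by (simp add: s_def)
  have "(fps_radical (\<lambda>_ _. 1) (Suc 1) D) ^ (Suc 1) = D"
    using power_radical[of D "\<lambda>_ _. (1::complex)" 1] D0 by simp
  then have s2: "s^2 = D" by (simp add: s_def numeral_2_eq_2)
  have uniq: "t = s" if "t $ 0 = 1" "t^2 = D" for t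
  proof -
    have "(t - s) * (t + s) = 0" using that s2 by (intro alg6) simp
    moreover have "t + s \<noteq> 0"
    proof
      assume eq: "t + s = 0"
      have "(t+s)$0 = 2" using that(1) s0 by simp
      then show False using eq by (metis fps_zero_nth zero_neq_numeral)
    qed
    ultimately show ?thesis by (metis mult_eq_0_iff eq_iff_diff_eq_0)
  qed
  have "fps_sqrt1 D = s"
    unfolding fps_sqrt1_def
  proof (rule the_equality)
    show "s $ 0 = 1 \<and> s ^ 2 = D" using s0 s2 by blast
    show "\<And>t. t $ 0 = 1 \<and> t ^ 2 = D \<Longrightarrow> t = s" using uniq by blast
  qed
  then show ?thesis using s0 s2 by simp
qed

theorem mainTheorem11:
  fixes g f :: "complex fps"
  defines "g \<equiv> (1 + fps_X ^ 2) / (1 - fps_X - fps_X ^ 2)"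
  defines "f \<equiv> (1 - fps_X - fps_X ^ 2
                 - fps_sqrt1 (fps_X ^ 4 + 10 * fps_X ^ 3 - 13 * fps_X ^ 2 - 10 * fps_X + 1))
               / (4 - 2 * fps_X)"
  shows "fps_nth f 0 = 0 \<and> fps_nth f 1 \<noteq> 0 \<and> is_riordan (g, f) \<and> pseudo_involution (g, f)"
proof -
  define X :: "complex fps" where "X = fps_X"
  define D :: "complex fps" where "D = fps_X ^ 4 + 10 * fps_X ^ 3 - 13 * fps_X ^ 2 - 10 * fps_X + 1"
  define S where "S = fps_sqrt1 D"
  define A :: "complex fps" where "A = 1 - X - X*X"
  have D0: "D $ 0 = 1" by (simp add: D_def)
  have D1: "D $ 1 = -10" by (simp add: D_def fps_numeral_nth)
  have S: "S $ 0 = 1" "S^2 = D" using sqrt1_props[OF D0] by (simp_all add: S_def)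
  have S1: "S $ 1 = -5"
  proof -
    have "(S*S) $ 1 = -10" using S(2) D1 by (simp add: power2_eq_square)
    then have "2 * S$1 = -10" using S(1) by (simp add: fps_mult_nth numeral_2_eq_2)
    then show ?thesis by simp
  qed
  have den0: "(4 - 2 * fps_X :: complex fps) $ 0 \<noteq> 0" by simp
  have fdef: "f * (4 - 2*X) = A - S"
  proof -
    have "f = (A - S) * inverse (4 - 2 * fps_X)"
      unfolding f_def S_def D_def A_def X_def by (simp add: fps_divide_unit[OF den0] power2_eq_square)
    then show ?thesis using inverse_mult_eq_1[OF den0] by (simp add: X_def mult.assoc)
  qed
  have f0: "f $ 0 = 0"
  proof -
    have "(f * (4 - 2*X)) $ 0 = 0" using fdef S by (simp add: A_def X_def)
    then show ?thesis by (simp add: X_def)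
  qed
  have f1: "f $ 1 = 1"
  proof -
    have "(f * (4 - 2*X)) $ 1 = 4" using fdef S1 by (simp add: A_def X_def fps_numeral_nth)
    then show ?thesis using f0 by (simp add: X_def fps_mult_nth numeral_2_eq_2 fps_numeral_nth)
  qed
  have SA: "S = A - f*(4-2*X)" using fdef by simp
  have DX: "D = X^4 + 10*X^3 - 13*X^2 - 10*X + 1" by (simp add: D_def X_def)
  have key: "4*(2-X)*((2-X)*f*f - A*f + X + 2*X*X) = S^2 - D"
    unfolding SA DX A_def by (rule alg1)
  have ne: "4*(2-X) \<noteq> (0::complex fps)"
  proof
    assume eq: "4*(2-X) = (0::complex fps)"
    have "(4*(2-X)::complex fps) $ 0 = 8" by (simp add: X_def)
    then show False using eq by (metis fps_zero_nth zero_neq_numeral)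
  qed
  have "4*(2-X)*((2-X)*f*f - A*f + X + 2*X*X) = 0" using key by (simp only: S(2) diff_self)
  then have Q: "(2-X)*f*f - A*f + X + 2*X*X = 0" using ne mult_eq_0_iff by blast
  define h where "h = -f"
  have h0: "h $ 0 = 0" using f0 by (simp add: h_def)
  have R: "(2-X)*h*h + (1-X-X*X)*h + X + 2*X*X = 0"
    using Q unfolding h_def A_def by (rule alg5)
  have Rs: "(2-h)*X*X + (1-h-h*h)*X + h + 2*h*h = 0"
    using R by (rule alg2)
  define y where "y = h oo h"
  have y0: "y $ 0 = 0" using h0 by (simp add: y_def)
  have Ry: "(2-h)*y*y + (1-h-h*h)*y + h + 2*h*h = 0"
  proof -
    have "((2-X)*h*h + (1-X-X*X)*h + X + 2*X*X) oo h = 0" by (simp only: R fps_compose_0)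
    then show ?thesis
      by (simp add: y_def X_def fps_compose_add_distrib fps_compose_sub_distrib fps_compose_mult_distrib[OF h0] h0)
  qed
  have "(y - X) * ((2-h)*(y+X) + 1 - h - h*h) = 0"
    using Ry Rs by (rule alg3)
  moreover have "(2-h)*(y+X) + 1 - h - h*h \<noteq> 0"
  proof
    assume eq: "(2-h)*(y+X) + 1 - h - h*h = 0"
    have "((2-h)*(y+X) + 1 - h - h*h) $ 0 = 1" using h0 y0 by (simp add: X_def)
    then show False using eq by (metis fps_zero_nth zero_neq_one)
  qed
  ultimately have yX: "h oo h = fps_X" by (simp add: y_def X_def)
  define B :: "complex fps" where "B = 1 - X - X*X"
  have B0: "B $ 0 \<noteq> 0" by (simp add: B_def X_def)
  have gB: "g * B = 1 + X*X"
  proof -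
    have "g = (1 + X*X) * inverse B"
      unfolding g_def B_def X_def using B0 by (simp add: fps_divide_unit B_def X_def power2_eq_square)
    then show ?thesis using inverse_mult_eq_1[OF B0] by (simp add: mult.assoc)
  qed
  have gBh: "(g oo h) * (1 - h - h*h) = 1 + h*h"
  proof -
    have "(g * B) oo h = (1 + X*X) oo h" by (simp only: gB)
    then show ?thesis
      by (simp add: B_def X_def fps_compose_add_distrib fps_compose_sub_distrib fps_compose_mult_distrib[OF h0] h0)
  qed
  have "(g * (g oo h)) * (B * (1 - h - h*h)) = 1 * (B * (1 - h - h*h))"
  proof -
    have "(g * (g oo h)) * (B * (1 - h - h*h)) = (g*B) * ((g oo h) * (1 - h - h*h))"
      by (rule alg7)
    also have "\<dots> = (1 + X*X) * (1 + h*h)" by (simp only: gB gBh)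
    also have "\<dots> = 1 * (B * (1 - h - h*h))" unfolding B_def using R by (rule alg4)
    finally show ?thesis .
  qed
  moreover have "B * (1 - h - h*h) \<noteq> 0"
  proof
    assume eq: "B * (1 - h - h*h) = 0"
    have "(B * (1 - h - h*h)) $ 0 = 1" using h0 by (simp add: B_def X_def)
    then show False using eq by (metis fps_zero_nth zero_neq_one)
  qed
  ultimately have gg: "g * (g oo h) = 1" by (metis mult_cancel_right mult_1)
  have M: "riordan_mult (g, f) riordan_M = (g, h)"
    by (simp add: riordan_mult_def riordan_M_def fps_compose_uminus h_def f0)
  have P: "pseudo_involution (g, f)"
    unfolding pseudo_involution_def M by (simp add: riordan_mult_def gg yX)
  have g0: "g $ 0 \<noteq> 0"
  proof -
    have "(g * B) $ 0 = 1" using gB by (simp add: X_def)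
    then show ?thesis by auto
  qed
  show ?thesis using f0 f1 g0 P by (simp add: is_riordan_def)
qed

end
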